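(* Let $G_n=(V_n,E)$ be a directed acyclic graph on $n$ vertices, let $H$ be a $2$-TC-spanner of $G_n$, and let $f:V_n\to\mathbb{R}$ be $\epsilon$-far from monotone. Then at least $\frac{\epsilon n}{2}$ edges $(x,y)$ of $H$ are violated by $f$, i.e. satisfy $f(x)>f(y)$.
   Context: For a digraph $G=(V,E)$, $TC(G)$ denotes its transitive closure (edge $(u,v)$ iff $v$ is reachable from $u$ by a directed path). A $k$-TC-spanner of $G$ is a digraph $H=(V,E_H)$ with $E_H\subseteq E(TC(G))$ such that $d_H(u,v)\le k$ whenever $v$ is reachable from $u$ in $G$. $f:V_n\to\mathbb{R}$ is monotone on $G_n$ if $f(x)\le f(y)$ for all $(x,y)\in E$, and $\epsilon$-far from monotone if $\min_{g\text{ monotone}}|\{x:f(x)\neq g(x)\}|\ge\epsilon n$. *)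

theory Defs
  imports Main "HOL-Library.Library"
begin

definition digraph :: "'a set \<Rightarrow> ('a \<times> 'a) set \<Rightarrow> bool" where
  "digraph V E \<longleftrightarrow> finite V \<and> E \<subseteq> V \<times> V"

definition dist_le :: "('a \<times> 'a) set \<Rightarrow> 'a \<Rightarrow> 'a \<Rightarrow> nat \<Rightarrow> bool" where
  "dist_le EH u v k \<longleftrightarrow> (\<exists>i\<le>k. (u, v) \<in> EH ^^ i)"

definition is_TC_spanner :: "'a set \<Rightarrow> ('a \<times> 'a) set \<Rightarrow> ('a \<times> 'a) set \<Rightarrow> nat \<Rightarrow> bool" where
  "is_TC_spanner V E EH k \<longleftrightarrow> EH \<subseteq> E\<^sup>+ \<and> (\<forall>u v. (u, v) \<in> E\<^sup>+ \<longrightarrow> dist_le EH u v k)"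

definition monotone_on_graph :: "('a \<times> 'a) set \<Rightarrow> ('a \<Rightarrow> real) \<Rightarrow> bool" where
  "monotone_on_graph E f \<longleftrightarrow> (\<forall>(x, y) \<in> E. f x \<le> f y)"

definition eps_far :: "'a set \<Rightarrow> ('a \<times> 'a) set \<Rightarrow> real \<Rightarrow> ('a \<Rightarrow> real) \<Rightarrow> bool" where
  "eps_far V E \<epsilon> f \<longleftrightarrow>
     (\<forall>g. monotone_on_graph E g \<longrightarrow> real (card {x \<in> V. f x \<noteq> g x}) \<ge> \<epsilon> * real (card V))"

definition violated_edges :: "('a \<times> 'a) set \<Rightarrow> ('a \<Rightarrow> real) \<Rightarrow> ('a \<times> 'a) set" where
  "violated_edges EH f = {(x, y) \<in> EH. f x > f y}"

end

theory Submission
  imports Defs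
begin

theorem mainTheorem2:
  fixes V :: "'a set" and E EH :: "('a \<times> 'a) set" and f :: "'a \<Rightarrow> real" and \<epsilon> :: real
  assumes "digraph V E"
    and "acyclic E"
    and "is_TC_spanner V E EH 2"
    and "eps_far V E \<epsilon> f"
  shows "real (card (violated_edges EH f)) \<ge> \<epsilon> * real (card V) / 2"
proof -
  have finV: "finite V" and EV: "E \<subseteq> V \<times> V" using assms(1) by (auto simp: digraph_def)
  have EHsub: "EH \<subseteq> E\<^sup>+" and sp: "\<And>u v. (u, v) \<in> E\<^sup>+ \<Longrightarrow> dist_le EH u v 2"
    using assms(3) by (auto simp: is_TC_spanner_def)
  have "E\<^sup>+ \<subseteq> V \<times> V" using EV by (metis trancl_subset_Sigma)
  hence EHV: "EH \<subseteq> V \<times> V" using EHsub by blast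
  define W where "W = violated_edges EH f"
  have finW: "finite W" unfolding W_def violated_edges_def
  proof (rule finite_subset)
    show "{(x, y) \<in> EH. f y < f x} \<subseteq> V \<times> V" using EHV by auto
    show "finite (V \<times> V)" using finV by simp
  qed
  define S where "S = fst ` W \<union> snd ` W"
  have cardS: "card S \<le> 2 * card W"
  proof -
    have "card S \<le> card (fst ` W) + card (snd ` W)" unfolding S_def by (rule card_Un_le)
    also have "\<dots> \<le> card W + card W" using card_image_le[OF finW] by (meson add_mono)
    finally show ?thesis by simp
  qed
  have key: "f u \<le> f x" if "(u, x) \<in> E\<^sup>*" "u \<notin> S" "x \<notin> S" for u x
  proof (cases "u = x")
    case True then show ?thesis by simp
  next
    case False
    hence "(u, x) \<in> E\<^sup>+" using that(1) by (meson rtranclD)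
    then obtain i where i: "i \<le> 2" "(u, x) \<in> EH ^^ i" using sp unfolding dist_le_def by blast
    show ?thesis
    proof (rule ccontr)
      assume nl: "\<not> f u \<le> f x"
      have "i = 0 \<or> i = 1 \<or> i = 2" using i(1) by auto
      moreover
      { assume "i = 0" hence False using i(2) False by simp }
      moreover
      { assume "i = 1" hence "(u, x) \<in> EH" using i(2) by simp
        hence "(u, x) \<in> W" using nl unfolding W_def violated_edges_def by auto
        hence False using that(2) unfolding S_def by force }
      moreover
      { assume "i = 2" then obtain z where z: "(u, z) \<in> EH" "(z, x) \<in> EH"
          using i(2) by (auto simp: numeral_2_eq_2)
        have "f u > f z \<or> f z > f x" using nl by auto
        hence False
        proof
          assume "f u > f z" hence "(u, z) \<in> W" using z unfolding W_def violated_edges_def by auto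
          thus False using that(2) unfolding S_def by force
        next
          assume "f z > f x" hence "(z, x) \<in> W" using z unfolding W_def violated_edges_def by auto
          thus False using that(3) unfolding S_def by force
        qed }
      ultimately show False by blast
    qed
  qed
  define L where "L = Min (insert 0 (f ` V))"
  define g where "g x = Max (insert L (f ` {u \<in> V - S. (u, x) \<in> E\<^sup>*}))" for x
  have fin: "finite (insert L (f ` {u \<in> V - S. (u, x) \<in> E\<^sup>*}))" for x using finV by auto
  have mono: "monotone_on_graph E g"
    unfolding monotone_on_graph_def
  proof (clarify)
    fix x y assume "(x, y) \<in> E"
    hence "{u \<in> V - S. (u, x) \<in> E\<^sup>*} \<subseteq> {u \<in> V - S. (u, y) \<in> E\<^sup>*}"
      by (auto intro: rtrancl_into_rtrancl)
    thus "g x \<le> g y" unfolding g_def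
      by (intro Max_mono fin) (auto)
  qed
  have eq: "g x = f x" if "x \<in> V" "x \<notin> S" for x
  proof -
    have "L \<le> f x" unfolding L_def using that finV by (intro Min_le) auto
    moreover have "\<forall>a \<in> f ` {u \<in> V - S. (u, x) \<in> E\<^sup>*}. a \<le> f x" using key that by auto
    moreover have "f x \<in> f ` {u \<in> V - S. (u, x) \<in> E\<^sup>*}" using that by auto
    ultimately show ?thesis unfolding g_def
      by (intro antisym Max.boundedI Max_ge fin) auto
  qed
  have "{x \<in> V. f x \<noteq> g x} \<subseteq> S" using eq by force
  hence "card {x \<in> V. f x \<noteq> g x} \<le> card S" using finW unfolding S_def by (intro card_mono) auto
  hence "real (card {x \<in> V. f x \<noteq> g x}) \<le> 2 * real (card W)" using cardS by linarith
  moreover have "real (card {x \<in> V. f x \<noteq> g x}) \<ge> \<epsilon> * real (card V)"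
    using assms(4) mono unfolding eps_far_def by blast
  ultimately show ?thesis unfolding W_def by linarith
qed

end
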